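(* If $f,g\in \ker\mathfrak{d}$, then $[f,g]_n\in \ker\mathfrak{d}$.
   Context: $\mathscr{P}$ is the set of partitions, $r_m(\lambda)$ the number of parts of $\lambda$ equal to $m$. The Faulhaber polynomial $F_l$ is the polynomial with zero constant term with $F_l(n)=\sum_{i=1}^n i^{l-1}$ for $n\ge1$. For $k\ge0,l\ge1$, $k+l$ even, $T_{k,l}(\lambda)=-\frac{B_{k+l}}{2(k+l)}(\delta_{l,1}+\delta_{k,0})+\sum_{m\ge1}m^kF_l(r_m(\lambda))$, with conventions $T_{0,0}\equiv T_{-1,1}\equiv-1$ and $T_{k,l}\equiv0$ for other $k<0$ or $l<1$. $\mathcal{T}$ is the algebra generated by the $T_{k,l}$; it has a basis of induced products $T_{k_1,l_1}\odot\cdots\odot T_{k_n,l_n}$ (with $\langle f\odot g\rangle_{\vec u}=\langle f\rangle_{\vec u}\langle g\rangle_{\vec u}$, $\langle f\rangle_{\vec u}=\sum_\lambda f(\lambda)u_{\lambda_1}u_{\lambda_2}\cdots/\sum_\lambda u_{\lambda_1}u_{\lambda_2}\cdots$), graded by assigning $T_{k,l}$ weight $k+l$. Derivations on $\mathcal{T}$: $D\,T_{k,l}=T_{k+1,l+1}$, $W\,T_{k,l}=(k+l)T_{k,l}$, $\mathfrak{d}\,T_{k,l}=k(l-1)T_{k-1,l-1}-\tfrac12\delta_{k+l-2}$ ($\delta_{k+l-2}=1$ iff $k+l=2$). For $f$ of weight $k$, $g$ of weight $l$ in $\mathcal{T}$ and $n\ge0$, the $n$th Rankin–Cohen bracket is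 $[f,g]_n=\sum_{r+s=n}(-1)^r\binom{k+n-1}{s}\binom{l+n-1}{r}D^rf\odot D^sg$. *)

theory Defs
  imports Complex_Main "HOL-Library.Poly_Mapping"
begin

text \<open>Since the induced products of the
generators T_{k,l} (k >= 0, l >= 1, k + l even) form a basis, (T, induced product)
is the free commutative real algebra on these generators. We model it as the
polynomial algebra with variables indexed by pairs (k,l): a monomial is a finitely
supported exponent map, a polynomial a finitely supported coefficient map on
monomials, and ring multiplication is the induced product.\<close>

type_synonym monom = "(nat \<times> nat, nat) poly_mapping"
type_synonym Talg = "(monom, real) poly_mapping"

definition valid_idx :: "nat \<times> nat \<Rightarrow> bool" where
  "valid_idx i \<longleftrightarrow> snd i \<ge> 1 \<and> even (fst i + snd i)"

definition in_T :: "Talg \<Rightarrow> bool" where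
  "in_T p \<longleftrightarrow> (\<forall>m\<in>Poly_Mapping.keys p. \<forall>i\<in>Poly_Mapping.keys m. valid_idx i)"

text \<open>The element T_{k,l} (with the conventions T_{0,0} = -1, and 0 for other
invalid indices; T_{-1,1} does not occur below since it only appears with factor 0).\<close>
definition Tgen :: "nat \<Rightarrow> nat \<Rightarrow> Talg" where
  "Tgen k l = (if valid_idx (k, l) then Poly_Mapping.single (Poly_Mapping.single (k, l) 1) 1
               else if k = 0 \<and> l = 0 then - 1 else 0)"

definition der :: "(nat \<times> nat \<Rightarrow> Talg) \<Rightarrow> Talg \<Rightarrow> Talg" where
  "der phi p = (\<Sum>m\<in>Poly_Mapping.keys p. \<Sum>i\<in>Poly_Mapping.keys m.
      Poly_Mapping.single (m - Poly_Mapping.single i 1) (Poly_Mapping.lookup p m * of_nat (Poly_Mapping.lookup m i)) * phi i)"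

definition Dop :: "Talg \<Rightarrow> Talg" where
  "Dop = der (\<lambda>(k, l). Tgen (k + 1) (l + 1))"

definition frak_d :: "Talg \<Rightarrow> Talg" where
  "frak_d = der (\<lambda>(k, l). of_nat (k * (l - 1)) * Tgen (k - 1) (l - 1)
                          - Poly_Mapping.single 0 (if k + l = 2 then 1 / 2 else 0))"

definition mon_weight :: "monom \<Rightarrow> nat" where
  "mon_weight m = (\<Sum>i\<in>Poly_Mapping.keys m. Poly_Mapping.lookup m i * (fst i + snd i))"

definition homogeneous :: "nat \<Rightarrow> Talg \<Rightarrow> bool" where
  "homogeneous w p \<longleftrightarrow> (\<forall>m\<in>Poly_Mapping.keys p. mon_weight m = w)"

text \<open>The n-th Rankin--Cohen bracket for f of weight k and g of weight l.\<close>
definition RC_bracket :: "nat \<Rightarrow> nat \<Rightarrow> nat \<Rightarrow> Talg \<Rightarrow> Talg \<Rightarrow> Talg" where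
  "RC_bracket k l n f g = (\<Sum>r\<le>n. let s = n - r in
      Poly_Mapping.single 0
        ((-1) ^ r * ((real k + real n - 1) gchoose s) * ((real l + real n - 1) gchoose r))
      * (Dop ^^ r) f * (Dop ^^ s) g)"

end

theory Submission
  imports Defs
begin


lemma pm_expand:
  fixes p :: "'a \<Rightarrow>\<^sub>0 'b::comm_monoid_add"
  shows "p = (\<Sum>m\<in>Poly_Mapping.keys p. Poly_Mapping.single m (Poly_Mapping.lookup p m))"
proof (rule poly_mapping_eqI)
  fix k
  have "Poly_Mapping.lookup (\<Sum>m\<in>Poly_Mapping.keys p. Poly_Mapping.single m (Poly_Mapping.lookup p m)) k
     = (\<Sum>m\<in>Poly_Mapping.keys p. (Poly_Mapping.lookup p m when m = k))"
    by (simp add: lookup_sum lookup_single)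
  also have "\<dots> = Poly_Mapping.lookup p k"
    by (cases "k \<in> Poly_Mapping.keys p") (auto simp: when_def in_keys_iff)
  finally show "Poly_Mapping.lookup p k = Poly_Mapping.lookup (\<Sum>m\<in>Poly_Mapping.keys p. Poly_Mapping.single m (Poly_Mapping.lookup p m)) k" by simp
qed

definition tmon :: "monom \<Rightarrow> Talg" where "tmon m = Poly_Mapping.single m 1"
definition var :: "nat \<times> nat \<Rightarrow> Talg" where "var i = tmon (Poly_Mapping.single i 1)"
definition dmon :: "(nat \<times> nat \<Rightarrow> Talg) \<Rightarrow> monom \<Rightarrow> Talg" where
  "dmon phi m = (\<Sum>i\<in>Poly_Mapping.keys m.
      Poly_Mapping.single (m - Poly_Mapping.single i 1) (of_nat (Poly_Mapping.lookup m i)) * phi i)"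

lemma dmon_superset:
  assumes "finite S" "Poly_Mapping.keys m \<subseteq> S"
  shows "dmon phi m = (\<Sum>i\<in>S.
      Poly_Mapping.single (m - Poly_Mapping.single i 1) (of_nat (Poly_Mapping.lookup m i)) * phi i)"
  unfolding dmon_def
  by (rule sum.mono_neutral_left) (use assms in \<open>auto simp: in_keys_iff\<close>)

lemma der_alt:
  assumes "finite S" "Poly_Mapping.keys p \<subseteq> S"
  shows "der phi p = (\<Sum>m\<in>S. Poly_Mapping.single 0 (Poly_Mapping.lookup p m) * dmon phi m)"
proof -
  have "der phi p = (\<Sum>m\<in>Poly_Mapping.keys p. Poly_Mapping.single 0 (Poly_Mapping.lookup p m) * dmon phi m)"
    unfolding der_def dmon_def sum_distrib_left
    by (intro sum.cong refl) (subst mult.assoc[symmetric], simp add: mult_single)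
  also have "\<dots> = (\<Sum>m\<in>S. Poly_Mapping.single 0 (Poly_Mapping.lookup p m) * dmon phi m)"
    by (rule sum.mono_neutral_left) (use assms in \<open>auto simp: in_keys_iff\<close>)
  finally show ?thesis .
qed

lemma der_single: "der phi (Poly_Mapping.single m c) = Poly_Mapping.single 0 c * dmon phi m"
  by (subst der_alt[of "{m}"]) auto

lemma der_add: "der phi (p + q) = der phi p + der phi q"
proof -
  let ?S = "Poly_Mapping.keys p \<union> Poly_Mapping.keys q"
  have "der phi (p + q) = (\<Sum>m\<in>?S. Poly_Mapping.single 0 (Poly_Mapping.lookup (p+q) m) * dmon phi m)"
    by (rule der_alt) (auto dest: set_mp[OF keys_add])
  also have "\<dots> = (\<Sum>m\<in>?S. Poly_Mapping.single 0 (Poly_Mapping.lookup p m) * dmon phi m)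
     + (\<Sum>m\<in>?S. Poly_Mapping.single 0 (Poly_Mapping.lookup q m) * dmon phi m)"
    by (simp add: lookup_add single_add distrib_right sum.distrib)
  also have "\<dots> = der phi p + der phi q"
    by (simp add: der_alt[symmetric])
  finally show ?thesis .
qed

lemma der_zero [simp]: "der phi 0 = 0"
  using der_add[of phi 0 0] by simp

lemma der_sum: "der phi (\<Sum>x\<in>A. h x) = (\<Sum>x\<in>A. der phi (h x))"
  by (induction A rule: infinite_finite_induct) (auto simp: der_add)

lemma der_uminus: "der phi (- p) = - der phi p"
  using der_add[of phi p "-p"] by (simp add: eq_neg_iff_add_eq_0 add.commute)

lemma der_diff: "der phi (p - q) = der phi p - der phi q"
  using der_add[of phi p "-q"] der_uminus[of phi q] by simp

lemma dmon_zero [simp]: "dmon phi 0 = 0"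
  by (simp add: dmon_def)

lemma der_const [simp]: "der phi (Poly_Mapping.single 0 c) = 0"
  by (simp add: der_single)

lemma tmon_add: "tmon (m + n) = tmon m * tmon n"
  by (simp add: tmon_def mult_single)

lemma dmon_add: "dmon phi (m + n) = tmon m * dmon phi n + dmon phi m * tmon n"
proof -
  let ?S = "Poly_Mapping.keys m \<union> Poly_Mapping.keys n"
  have fS: "finite ?S" by simp
  have k: "Poly_Mapping.keys (m + n) \<subseteq> ?S" by (rule keys_add)
  have tm: "Poly_Mapping.single (m + n - Poly_Mapping.single i 1) (of_nat (Poly_Mapping.lookup (m+n) i)) * phi i
     = tmon m * (Poly_Mapping.single (n - Poly_Mapping.single i 1) (of_nat (Poly_Mapping.lookup n i)) * phi i)
     + Poly_Mapping.single (m - Poly_Mapping.single i 1) (of_nat (Poly_Mapping.lookup m i)) * phi i * tmon n" for i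
  proof -
    have e1: "tmon m * Poly_Mapping.single (n - Poly_Mapping.single i 1) (of_nat (Poly_Mapping.lookup n i) :: real)
        = Poly_Mapping.single (m + n - Poly_Mapping.single i 1) (of_nat (Poly_Mapping.lookup n i))"
    proof (cases "Poly_Mapping.lookup n i = 0")
      case False
      have "m + (n - Poly_Mapping.single i 1) = m + n - Poly_Mapping.single i 1"
        using False by (intro poly_mapping_eqI) (auto simp: lookup_add lookup_minus lookup_single when_def)
      then show ?thesis by (simp add: tmon_def mult_single)
    qed simp
    have e2: "Poly_Mapping.single (m - Poly_Mapping.single i 1) (of_nat (Poly_Mapping.lookup m i) :: real) * tmon n
        = Poly_Mapping.single (m + n - Poly_Mapping.single i 1) (of_nat (Poly_Mapping.lookup m i))"
    proof (cases "Poly_Mapping.lookup m i = 0")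
      case False
      have "(m - Poly_Mapping.single i 1) + n = m + n - Poly_Mapping.single i 1"
        using False by (intro poly_mapping_eqI) (auto simp: lookup_add lookup_minus lookup_single when_def)
      then show ?thesis by (simp add: tmon_def mult_single)
    qed simp
    let ?A = "Poly_Mapping.single (n - Poly_Mapping.single i 1) (of_nat (Poly_Mapping.lookup n i) :: real)"
    let ?B = "Poly_Mapping.single (m - Poly_Mapping.single i 1) (of_nat (Poly_Mapping.lookup m i) :: real)"
    have "tmon m * (?A * phi i) + ?B * phi i * tmon n = (tmon m * ?A) * phi i + (?B * tmon n) * phi i"
      by (simp add: ac_simps)
    also have "\<dots> = Poly_Mapping.single (m + n - Poly_Mapping.single i 1) (of_nat (Poly_Mapping.lookup n i)) * phi i
       + Poly_Mapping.single (m + n - Poly_Mapping.single i 1) (of_nat (Poly_Mapping.lookup m i)) * phi i"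
      by (simp only: e1 e2)
    also have "\<dots> = Poly_Mapping.single (m + n - Poly_Mapping.single i 1) (of_nat (Poly_Mapping.lookup (m+n) i)) * phi i"
      by (simp add: lookup_add single_add distrib_right add.commute)
    finally show ?thesis by simp
  qed
  have "dmon phi (m + n) = (\<Sum>i\<in>?S. Poly_Mapping.single (m + n - Poly_Mapping.single i 1) (of_nat (Poly_Mapping.lookup (m+n) i)) * phi i)"
    by (rule dmon_superset[OF fS k])
  also have "\<dots> = tmon m * (\<Sum>i\<in>?S. Poly_Mapping.single (n - Poly_Mapping.single i 1) (of_nat (Poly_Mapping.lookup n i)) * phi i)
     + (\<Sum>i\<in>?S. Poly_Mapping.single (m - Poly_Mapping.single i 1) (of_nat (Poly_Mapping.lookup m i)) * phi i) * tmon n"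
    unfolding sum_distrib_left sum_distrib_right sum.distrib[symmetric] by (rule sum.cong[OF refl], rule tm)
  also have "\<dots> = tmon m * dmon phi n + dmon phi m * tmon n"
    using dmon_superset[OF fS, of n phi] dmon_superset[OF fS, of m phi] by simp
  finally show ?thesis .
qed

lemma single_tmon: "Poly_Mapping.single m c = Poly_Mapping.single 0 c * tmon m"
  by (simp add: tmon_def mult_single)

lemma single0_mult: "Poly_Mapping.single 0 (a * b) = (Poly_Mapping.single 0 a * Poly_Mapping.single 0 b :: Talg)"
  by (simp add: mult_single)

lemma pm_mult_expand:
  fixes p q :: Talg
  shows "p * q = (\<Sum>m\<in>Poly_Mapping.keys p. \<Sum>n\<in>Poly_Mapping.keys q.
     Poly_Mapping.single 0 (Poly_Mapping.lookup p m) * Poly_Mapping.single 0 (Poly_Mapping.lookup q n) * tmon (m + n))"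
proof -
  have "p * q = (\<Sum>m\<in>Poly_Mapping.keys p. Poly_Mapping.single m (Poly_Mapping.lookup p m))
       * (\<Sum>n\<in>Poly_Mapping.keys q. Poly_Mapping.single n (Poly_Mapping.lookup q n))"
    by (rule arg_cong2[where f="(*)"]; rule pm_expand)
  also have "\<dots> = (\<Sum>m\<in>Poly_Mapping.keys p. \<Sum>n\<in>Poly_Mapping.keys q.
     Poly_Mapping.single 0 (Poly_Mapping.lookup p m) * Poly_Mapping.single 0 (Poly_Mapping.lookup q n) * tmon (m + n))"
    unfolding sum_product by (intro sum.cong refl) (simp add: mult_single tmon_def)
  finally show ?thesis .
qed

lemma der_mult: "der phi (p * q) = der phi p * q + p * der phi q"
proof -
  let ?a = "\<lambda>m. Poly_Mapping.single 0 (Poly_Mapping.lookup p m) :: Talg"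
  let ?b = "\<lambda>n. Poly_Mapping.single 0 (Poly_Mapping.lookup q n) :: Talg"
  have dp: "der phi p = (\<Sum>m\<in>Poly_Mapping.keys p. ?a m * dmon phi m)"
    by (rule der_alt) auto
  have dq: "der phi q = (\<Sum>n\<in>Poly_Mapping.keys q. ?b n * dmon phi n)"
    by (rule der_alt) auto
  have ep: "p = (\<Sum>m\<in>Poly_Mapping.keys p. ?a m * tmon m)"
    unfolding single_tmon[symmetric] by (rule pm_expand)
  have eq: "q = (\<Sum>n\<in>Poly_Mapping.keys q. ?b n * tmon n)"
    unfolding single_tmon[symmetric] by (rule pm_expand)
  have "der phi (p * q) = (\<Sum>m\<in>Poly_Mapping.keys p. \<Sum>n\<in>Poly_Mapping.keys q.
      ?a m * ?b n * (tmon m * dmon phi n + dmon phi m * tmon n))"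
    by (subst pm_mult_expand) (simp add: der_sum single_tmon[symmetric] der_single mult_single dmon_add)
  also have "\<dots> = (\<Sum>m\<in>Poly_Mapping.keys p. ?a m * dmon phi m) * (\<Sum>n\<in>Poly_Mapping.keys q. ?b n * tmon n)
      + (\<Sum>m\<in>Poly_Mapping.keys p. ?a m * tmon m) * (\<Sum>n\<in>Poly_Mapping.keys q. ?b n * dmon phi n)"
    unfolding sum_product sum.distrib[symmetric]
    by (intro sum.cong refl) (simp add: algebra_simps)
  also have "\<dots> = der phi p * q + p * der phi q"
    by (simp only: dp[symmetric] dq[symmetric] ep[symmetric] eq[symmetric])
  finally show ?thesis .
qed



lemma der_scal: "der phi (Poly_Mapping.single 0 c * p) = Poly_Mapping.single 0 c * der phi p"
  by (simp add: der_mult)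

lemma der_of_nat: "der phi (of_nat a * p) = of_nat a * der phi p"
  using der_scal[of phi "of_nat a" p] by simp

lemma der_var: "der phi (var i) = phi i"
  by (simp add: var_def tmon_def der_single dmon_def)

lemma var_pow: "var i ^ n = tmon (Poly_Mapping.single i n)"
proof (induction n)
  case 0 then show ?case by (simp add: tmon_def)
next
  case (Suc n)
  have "Poly_Mapping.single i n + Poly_Mapping.single i 1 = Poly_Mapping.single i (Suc n)"
    by (simp add: single_add[symmetric])
  then show ?case using Suc by (simp add: var_def tmon_add[symmetric] mult.commute)
qed

lemma tmon_sum: "(\<Prod>x\<in>A. tmon (h x)) = tmon (\<Sum>x\<in>A. h x)"
  by (induction A rule: infinite_finite_induct) (auto simp: tmon_def mult_single)

lemma tmon_expand: "tmon m = (\<Prod>i\<in>Poly_Mapping.keys m. var i ^ Poly_Mapping.lookup m i)"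
  by (simp add: var_pow tmon_sum pm_expand[of m, symmetric])

lemma vanish:
  fixes C :: "Talg \<Rightarrow> Talg"
  assumes add: "\<And>p q. C (p + q) = C p + C q"
    and scal: "\<And>c p. C (Poly_Mapping.single 0 c * p) = Poly_Mapping.single 0 c * C p"
    and lb: "\<And>p q. C (p * q) = C p * q + p * C q"
    and gen: "\<And>i. valid_idx i \<Longrightarrow> C (var i) = 0"
    and T: "in_T p"
  shows "C p = 0"
proof -
  have C0: "C 0 = 0" using add[of 0 0] by simp
  have Csum: "C (\<Sum>x\<in>A. h x) = (\<Sum>x\<in>A. C (h x))" for A and h :: "'z \<Rightarrow> Talg"
    by (induction A rule: infinite_finite_induct) (auto simp: add C0)
  have C1: "C 1 = 0" using lb[of 1 1] by simp
  have Cpow: "C (var i ^ n) = 0" if "valid_idx i" for i n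
    by (induction n) (auto simp: C1 lb gen[OF that])
  have Cprod: "(\<forall>x\<in>A. C (h x) = 0) \<Longrightarrow> C (\<Prod>x\<in>A. h x) = 0" for A and h :: "'z \<Rightarrow> Talg"
    by (induction A rule: infinite_finite_induct) (auto simp: C1 lb)
  have Cmon: "C (tmon m) = 0" if "\<forall>i\<in>Poly_Mapping.keys m. valid_idx i" for m
    unfolding tmon_expand using that by (intro Cprod) (auto intro: Cpow)
  have "p = (\<Sum>m\<in>Poly_Mapping.keys p. Poly_Mapping.single 0 (Poly_Mapping.lookup p m) * tmon m)"
    unfolding single_tmon[symmetric] by (rule pm_expand)
  then have "C p = C (\<Sum>m\<in>Poly_Mapping.keys p. Poly_Mapping.single 0 (Poly_Mapping.lookup p m) * tmon m)"
    by (rule arg_cong)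
  also have "\<dots> = (\<Sum>m\<in>Poly_Mapping.keys p. Poly_Mapping.single 0 (Poly_Mapping.lookup p m) * C (tmon m))"
    by (simp only: Csum scal)
  also have "\<dots> = 0"
  proof (rule sum.neutral, rule ballI)
    fix m assume "m \<in> Poly_Mapping.keys p"
    then have "C (tmon m) = 0" using T unfolding in_T_def by (intro Cmon) blast
    then show "Poly_Mapping.single 0 (Poly_Mapping.lookup p m) * C (tmon m) = 0" by simp
  qed
  finally show ?thesis .
qed



lemma in_T_zero [simp]: "in_T 0" by (simp add: in_T_def)
lemma in_T_add: "in_T p \<Longrightarrow> in_T q \<Longrightarrow> in_T (p + q)"
  unfolding in_T_def using keys_add[of p q] by (meson Un_iff subsetD)
lemma in_T_sum: "(\<And>x. x \<in> A \<Longrightarrow> in_T (h x)) \<Longrightarrow> in_T (\<Sum>x\<in>A. h x)"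
  by (induction A rule: infinite_finite_induct) (auto simp: in_T_add)
lemma in_T_mult:
  assumes "in_T p" "in_T q" shows "in_T (p * q)"
  unfolding in_T_def
proof (intro ballI)
  fix m i assume m: "m \<in> Poly_Mapping.keys (p * q)" and i: "i \<in> Poly_Mapping.keys m"
  from m keys_mult[of p q] obtain a b where ab: "m = a + b" "a \<in> Poly_Mapping.keys p" "b \<in> Poly_Mapping.keys q"
    by blast
  from i ab(1) keys_add[of a b] have "i \<in> Poly_Mapping.keys a \<or> i \<in> Poly_Mapping.keys b" by blast
  then show "valid_idx i" using assms ab unfolding in_T_def by blast
qed
lemma in_T_single: "(\<forall>i\<in>Poly_Mapping.keys m. valid_idx i) \<Longrightarrow> in_T (Poly_Mapping.single m c)"
  by (simp add: in_T_def)
lemma in_T_Tgen: "in_T (Tgen k l)"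
  by (auto simp: Tgen_def in_T_def keys_single)
lemma in_T_const: "in_T (Poly_Mapping.single 0 c)"
  by (simp add: in_T_def)
lemma in_T_of_nat: "in_T (of_nat n)"
  using in_T_const[of "of_nat n"] by simp

lemma keys_minus_single: "Poly_Mapping.keys (m - Poly_Mapping.single i (1::nat)) \<subseteq> Poly_Mapping.keys m"
  by (auto simp: in_keys_iff lookup_minus)

lemma in_T_der:
  assumes "in_T p" "\<And>i. in_T (phi i)"
  shows "in_T (der phi p)"
proof -
  have *: "in_T (Poly_Mapping.single (m - Poly_Mapping.single i 1) c * phi i)"
    if "m \<in> Poly_Mapping.keys p" for m i c
  proof (rule in_T_mult[OF in_T_single assms(2)])
    show "\<forall>j\<in>Poly_Mapping.keys (m - Poly_Mapping.single i 1). valid_idx j"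
      using keys_minus_single[of m i] assms(1) that unfolding in_T_def by blast
  qed
  show ?thesis unfolding der_def
    by (rule in_T_sum, rule in_T_sum, rule *)
qed

lemma in_T_Dop: "in_T p \<Longrightarrow> in_T (Dop p)"
  unfolding Dop_def by (rule in_T_der) (auto simp: in_T_Tgen split: prod.split)

lemma in_T_Dpow: "in_T p \<Longrightarrow> in_T ((Dop ^^ r) p)"
  by (induction r) (auto simp: in_T_Dop)



definition Wop :: "Talg \<Rightarrow> Talg" where
  "Wop = der (\<lambda>i. of_nat (fst i + snd i) * var i)"

lemma single_sum: "(\<Sum>x\<in>A. Poly_Mapping.single m (h x)) = Poly_Mapping.single m (\<Sum>x\<in>A. h x)"
  by (induction A rule: infinite_finite_induct) (auto simp: single_add)

lemma Tgen_valid: "valid_idx (k, l) \<Longrightarrow> Tgen k l = var (k, l)"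
  by (simp add: Tgen_def var_def tmon_def)

lemma valid_Suc: "valid_idx (k, l) \<Longrightarrow> valid_idx (k+1, l+1)"
  by (simp add: valid_idx_def)

lemma Dop_var:
  assumes "valid_idx (k, l)" shows "Dop (var (k, l)) = var (k+1, l+1)"
proof -
  have "Tgen (k+1) (l+1) = var (k+1, l+1)" by (rule Tgen_valid[OF valid_Suc[OF assms]])
  then show ?thesis by (simp add: Dop_def der_var)
qed

lemma Dop_const [simp]: "Dop (Poly_Mapping.single 0 c) = 0"
  by (simp add: Dop_def)

lemma Dop_of_nat_mult: "Dop (of_nat a * p) = of_nat a * Dop p"
  by (simp add: Dop_def der_of_nat)

lemma fd_var: "frak_d (var (k, l)) = of_nat (k * (l - 1)) * Tgen (k - 1) (l - 1)
     - Poly_Mapping.single 0 (if k + l = 2 then 1 / 2 else 0)"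
  by (simp add: frak_d_def der_var)

lemma Dop_fd_var:
  assumes "valid_idx (k, l)"
  shows "Dop (frak_d (var (k, l))) = of_nat (k * (l - 1)) * var (k, l)"
proof (cases "k * (l - 1) = 0")
  case True
  then show ?thesis unfolding fd_var True by (simp add: Dop_def der_diff der_uminus)
next
  case False
  then have v: "valid_idx (k - 1, l - 1)" using assms by (auto simp: valid_idx_def)
  have "Dop (Tgen (k - 1) (l - 1)) = var (k, l)"
    unfolding Tgen_valid[OF v] using Dop_var[OF v] False by simp
  moreover have "Dop (frak_d (var (k, l))) = of_nat (k * (l - 1)) * Dop (Tgen (k - 1) (l - 1))"
    unfolding fd_var Dop_def by (simp only: der_diff der_of_nat der_const diff_zero)
  ultimately show ?thesis by simp
qed

lemma fd_Dop_var:
  assumes "valid_idx (k, l)"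
  shows "frak_d (Dop (var (k, l))) = of_nat ((k + 1) * l) * var (k, l)"
proof -
  have "l \<ge> 1" using assms by (simp add: valid_idx_def)
  then show ?thesis
    using assms by (simp add: Dop_var fd_var Tgen_valid)
qed

lemma Wop_var: "Wop (var (k, l)) = of_nat (k + l) * var (k, l)"
  by (simp add: Wop_def der_var)

lemma Wop_const [simp]: "Wop (Poly_Mapping.single 0 c) = 0"
  by (simp add: Wop_def)

lemma of_nat_mult_single: "(of_nat w :: Talg) * Poly_Mapping.single x a = Poly_Mapping.single x (of_nat w * a)"
proof -
  have "(of_nat w :: Talg) = Poly_Mapping.single 0 (of_nat w)" by simp
  then show ?thesis by (simp only: mult_single add_0)
qed

lemma Wop_hom:
  assumes "homogeneous w p"
  shows "Wop p = of_nat w * p"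
proof -
  have dm: "dmon (\<lambda>i. of_nat (fst i + snd i) * var i) m = Poly_Mapping.single m (of_nat (mon_weight m))" for m
  proof -
    have "dmon (\<lambda>i. of_nat (fst i + snd i) * var i) m
       = (\<Sum>i\<in>Poly_Mapping.keys m. Poly_Mapping.single m (of_nat (Poly_Mapping.lookup m i * (fst i + snd i))))"
      unfolding dmon_def
    proof (intro sum.cong refl)
      fix i assume i: "i \<in> Poly_Mapping.keys m"
      have e: "m - Poly_Mapping.single i 1 + (0 + Poly_Mapping.single i 1) = m"
        using i by (intro poly_mapping_eqI) (auto simp: lookup_add lookup_minus lookup_single when_def in_keys_iff)
      have "Poly_Mapping.single (m - Poly_Mapping.single i 1) (of_nat (Poly_Mapping.lookup m i))
          * (of_nat (fst i + snd i) * var i)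
        = Poly_Mapping.single (m - Poly_Mapping.single i 1) (of_nat (Poly_Mapping.lookup m i))
          * (Poly_Mapping.single 0 (of_nat (fst i + snd i)) * Poly_Mapping.single (Poly_Mapping.single i 1) (1::real))"
        by (simp only: var_def tmon_def single_of_nat)
      also have "\<dots> = Poly_Mapping.single m (of_nat (Poly_Mapping.lookup m i * (fst i + snd i)))"
        unfolding mult_single e by simp
      finally show "Poly_Mapping.single (m - Poly_Mapping.single i 1) (of_nat (Poly_Mapping.lookup m i))
          * (of_nat (fst i + snd i) * var i) = Poly_Mapping.single m (of_nat (Poly_Mapping.lookup m i * (fst i + snd i)))" .
    qed
    also have "\<dots> = Poly_Mapping.single m (of_nat (mon_weight m))"
      by (simp add: single_sum mon_weight_def)
    finally show ?thesis .
  qed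
  have "Wop p = (\<Sum>m\<in>Poly_Mapping.keys p. Poly_Mapping.single 0 (Poly_Mapping.lookup p m) * Poly_Mapping.single m (of_nat (mon_weight m)))"
    unfolding Wop_def dm[symmetric] by (rule der_alt) auto
  also have "\<dots> = (\<Sum>m\<in>Poly_Mapping.keys p. of_nat w * Poly_Mapping.single m (Poly_Mapping.lookup p m))"
    using assms unfolding homogeneous_def
    by (intro sum.cong refl) (simp add: mult_single of_nat_mult_single mult.commute)
  also have "\<dots> = of_nat w * p"
    by (simp add: sum_distrib_left[symmetric] pm_expand[of p, symmetric])
  finally show ?thesis .
qed



lemma Dop_add: "Dop (p + q) = Dop p + Dop q" by (simp add: Dop_def der_add)
lemma fd_add: "frak_d (p + q) = frak_d p + frak_d q" by (simp add: frak_d_def der_add)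
lemma Wop_add: "Wop (p + q) = Wop p + Wop q" by (simp add: Wop_def der_add)
lemma Dop_diff: "Dop (p - q) = Dop p - Dop q" by (simp add: Dop_def der_diff)
lemma fd_diff: "frak_d (p - q) = frak_d p - frak_d q" by (simp add: frak_d_def der_diff)
lemma Wop_diff: "Wop (p - q) = Wop p - Wop q" by (simp add: Wop_def der_diff)
lemma Dop_mult: "Dop (p * q) = Dop p * q + p * Dop q" by (simp add: Dop_def der_mult)
lemma fd_mult: "frak_d (p * q) = frak_d p * q + p * frak_d q" by (simp add: frak_d_def der_mult)
lemma Wop_mult: "Wop (p * q) = Wop p * q + p * Wop q" by (simp add: Wop_def der_mult)
lemma Dop_scal: "Dop (Poly_Mapping.single 0 c * p) = Poly_Mapping.single 0 c * Dop p" by (simp add: Dop_def der_scal)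
lemma fd_scal: "frak_d (Poly_Mapping.single 0 c * p) = Poly_Mapping.single 0 c * frak_d p" by (simp add: frak_d_def der_scal)
lemma Wop_scal: "Wop (Poly_Mapping.single 0 c * p) = Poly_Mapping.single 0 c * Wop p" by (simp add: Wop_def der_scal)
lemma fd_sum: "frak_d (\<Sum>x\<in>A. h x) = (\<Sum>x\<in>A. frak_d (h x))" by (simp add: frak_d_def der_sum)

lemma comm1:
  assumes "in_T p"
  shows "frak_d (Dop p) = Dop (frak_d p) + Wop p"
proof -
  let ?C = "\<lambda>p. frak_d (Dop p) - Dop (frak_d p) - Wop p"
  have "?C p = 0"
  proof (rule vanish[OF _ _ _ _ assms])
    show "?C (p + q) = ?C p + ?C q" for p q
      by (simp add: Dop_add fd_add Wop_add algebra_simps)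
    show "?C (Poly_Mapping.single 0 c * p) = Poly_Mapping.single 0 c * ?C p" for c p
      by (simp only: Dop_scal fd_scal Wop_scal) (simp add: algebra_simps)
    show "?C (p * q) = ?C p * q + p * ?C q" for p q
      by (simp add: Dop_add fd_add Wop_add Dop_mult fd_mult Wop_mult algebra_simps)
    show "?C (var i) = 0" if "valid_idx i" for i
    proof -
      obtain k l where i: "i = (k, l)" by (cases i)
      have v: "valid_idx (k, l)" using that i by simp
      then have "l \<ge> 1" by (simp add: valid_idx_def)
      then have "(k + 1) * l = k * (l - 1) + (k + l)"
        by (cases l) (auto simp: algebra_simps)
      then have "(of_nat ((k + 1) * l) :: Talg) = of_nat (k * (l - 1)) + of_nat (k + l)"
        by (metis of_nat_add)
      then show ?thesis
        unfolding i fd_Dop_var[OF v] Dop_fd_var[OF v] Wop_var by (simp add: algebra_simps)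
    qed
  qed
  then show ?thesis by (simp add: diff_eq_eq)
qed

lemma comm2:
  assumes "in_T p"
  shows "Wop (Dop p) = Dop (Wop p) + 2 * Dop p"
proof -
  let ?C = "\<lambda>p. Wop (Dop p) - Dop (Wop p) - 2 * Dop p"
  have "?C p = 0"
  proof (rule vanish[OF _ _ _ _ assms])
    show "?C (p + q) = ?C p + ?C q" for p q
      by (simp add: Dop_add Wop_add algebra_simps)
    show "?C (Poly_Mapping.single 0 c * p) = Poly_Mapping.single 0 c * ?C p" for c p
      by (simp only: Dop_scal Wop_scal) (simp add: algebra_simps)
    show "?C (p * q) = ?C p * q + p * ?C q" for p q
      by (simp add: Dop_add Wop_add Dop_mult Wop_mult algebra_simps)
    show "?C (var i) = 0" if "valid_idx i" for i
    proof -
      obtain k l where i: "i = (k, l)" by (cases i)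
      have v: "valid_idx (k, l)" using that i by simp
      have "(of_nat (k + 1 + (l + 1)) :: Talg) = of_nat (k + l) + 2"
        by simp
      then show ?thesis
        unfolding i Dop_var[OF v] Wop_var Dop_of_nat_mult by (simp add: algebra_simps)
    qed
  qed
  then show ?thesis by (simp add: diff_eq_eq)
qed

lemma Dpow_Suc: "(Dop ^^ Suc r) f = Dop ((Dop ^^ r) f)" by simp

lemma W_Dpow:
  assumes "in_T f" "homogeneous k f"
  shows "Wop ((Dop ^^ r) f) = of_nat (k + 2 * r) * (Dop ^^ r) f"
proof (induction r)
  case 0 then show ?case using Wop_hom[OF assms(2)] by simp
next
  case (Suc r)
  have "Wop ((Dop ^^ Suc r) f) = Dop (Wop ((Dop ^^ r) f)) + 2 * Dop ((Dop ^^ r) f)"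
    using comm2[OF in_T_Dpow[OF assms(1)]] by simp
  also have "\<dots> = of_nat (k + 2 * r) * (Dop ^^ Suc r) f + 2 * (Dop ^^ Suc r) f"
    by (simp only: Suc.IH Dop_of_nat_mult Dpow_Suc)
  also have "\<dots> = of_nat (k + 2 * Suc r) * (Dop ^^ Suc r) f"
    by (simp add: algebra_simps)
  finally show ?case .
qed

lemma fd_Dpow:
  assumes "in_T f" "homogeneous k f" "frak_d f = 0"
  shows "frak_d ((Dop ^^ r) f) = of_nat (r * (k + r - 1)) * (Dop ^^ (r - 1)) f"
proof (induction r)
  case 0 then show ?case using assms(3) by simp
next
  case (Suc r)
  have "frak_d ((Dop ^^ Suc r) f) = Dop (frak_d ((Dop ^^ r) f)) + Wop ((Dop ^^ r) f)"
    using comm1[OF in_T_Dpow[OF assms(1)]] by simp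
  also have "\<dots> = of_nat (r * (k + r - 1)) * Dop ((Dop ^^ (r - 1)) f) + of_nat (k + 2 * r) * (Dop ^^ r) f"
    by (simp only: Suc.IH W_Dpow[OF assms(1,2)] Dop_of_nat_mult)
  also have "\<dots> = of_nat (Suc r * (k + Suc r - 1)) * (Dop ^^ (Suc r - 1)) f"
  proof (cases r)
    case 0 then show ?thesis by simp
  next
    case (Suc r')
    have "r * (k + r - 1) + (k + 2 * r) = Suc r * (k + Suc r - 1)"
      using Suc by (simp add: algebra_simps)
    then have "(of_nat (r * (k + r - 1)) :: Talg) + of_nat (k + 2 * r) = of_nat (Suc r * (k + Suc r - 1))"
      by (metis of_nat_add)
    then show ?thesis using Suc
      by (simp only: Dpow_Suc[symmetric] diff_Suc_1 distrib_right[symmetric])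
  qed
  finally show ?case .
qed



lemma fd_const: "frak_d (Poly_Mapping.single 0 c) = 0" by (simp add: frak_d_def)

lemma alg_id:
  fixes X0 X1 Y0 Y1 K L a1 b1 :: real
  assumes "a1 * Y1 = L * Y0" "b1 * X1 = K * X0"
  shows "(-1) ^ Suc r * X0 * Y1 * (a1 * K) + (-1) ^ r * X1 * Y0 * (b1 * L) = 0"
proof -
  have "(-1) ^ Suc r * X0 * Y1 * (a1 * K) + (-1) ^ r * X1 * Y0 * (b1 * L)
      = (-1) ^ r * (Y0 * L * (b1 * X1) - X0 * K * (a1 * Y1))"
    by (simp add: algebra_simps)
  also have "\<dots> = (-1) ^ r * (Y0 * L * (K * X0) - X0 * K * (L * Y0))"
    using assms by simp
  also have "\<dots> = 0" by (simp add: algebra_simps)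
  finally show ?thesis .
qed

lemma coef_id:
  fixes r b k l :: nat
  defines "x \<equiv> real k + real (Suc (r + b)) - 1" and "y \<equiv> real l + real (Suc (r + b)) - 1"
  shows "(-1) ^ Suc r * (x gchoose b) * (y gchoose Suc r) * real (Suc r * (k + Suc r - 1))
       + (-1) ^ r * (x gchoose Suc b) * (y gchoose r) * real (Suc b * (l + Suc b - 1)) = 0"
proof -
  have hy: "real (Suc r) * (y gchoose Suc r) = (real l + real b) * (y gchoose r)"
    using gbinomial_mult_1[of y r] by (simp add: y_def algebra_simps)
  have hx: "real (Suc b) * (x gchoose Suc b) = (real k + real r) * (x gchoose b)"
    using gbinomial_mult_1[of x b] by (simp add: x_def algebra_simps)
  have e1: "real (Suc r * (k + Suc r - 1)) = real (Suc r) * (real k + real r)" by (simp add: algebra_simps)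
  have e2: "real (Suc b * (l + Suc b - 1)) = real (Suc b) * (real l + real b)" by (simp add: algebra_simps)
  show ?thesis unfolding e1 e2 by (rule alg_id[OF hy hx])
qed

theorem proposition5p3p2:
  fixes f g :: Talg and k l n :: nat
  assumes "in_T f" and "in_T g"
    and "homogeneous k f" and "homogeneous l g"
    and "frak_d f = 0" and "frak_d g = 0"
  shows "frak_d (RC_bracket k l n f g) = 0"
proof -
  define A where "A r = (Dop ^^ r) f" for r
  define B where "B s = (Dop ^^ s) g" for s
  define c where "c r = (-1::real) ^ r * ((real k + real n - 1) gchoose (n - r)) * ((real l + real n - 1) gchoose r)" for r
  define X where "X r = Poly_Mapping.single 0 (c r * real (r * (k + r - 1))) * A (r - 1) * B (n - r)" for r
  define Y where "Y r = Poly_Mapping.single 0 (c r * real ((n - r) * (l + (n - r) - 1))) * A r * B (n - r - 1)" for r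
  have fA: "frak_d (A r) = of_nat (r * (k + r - 1)) * A (r - 1)" for r
    unfolding A_def by (rule fd_Dpow[OF assms(1,3,5)])
  have fB: "frak_d (B s) = of_nat (s * (l + s - 1)) * B (s - 1)" for s
    unfolding B_def by (rule fd_Dpow[OF assms(2,4,6)])
  have br: "RC_bracket k l n f g = (\<Sum>r\<le>n. Poly_Mapping.single 0 (c r) * A r * B (n - r))"
    unfolding RC_bracket_def Let_def A_def B_def c_def by simp
  have tm: "frak_d (Poly_Mapping.single 0 (c r) * A r * B (n - r)) = X r + Y r" for r
  proof -
    have "frak_d (Poly_Mapping.single 0 (c r) * A r * B (n - r))
       = Poly_Mapping.single 0 (c r) * (of_nat (r * (k + r - 1)) * A (r - 1) * B (n - r)
          + A r * (of_nat ((n - r) * (l + (n - r) - 1)) * B (n - r - 1)))"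
      by (simp only: fd_mult fd_const fA fB mult_zero_left add_0 distrib_left mult.assoc)
    also have "\<dots> = X r + Y r"
      unfolding X_def Y_def single0_mult single_of_nat by (simp add: algebra_simps)
    finally show ?thesis .
  qed
  have main: "frak_d (RC_bracket k l n f g) = (\<Sum>r\<le>n. X r + Y r)"
    by (simp only: br fd_sum tm)
  show ?thesis
  proof (cases n)
    case 0
    then show ?thesis unfolding main by (simp add: X_def Y_def)
  next
    case (Suc n')
    have X0: "X 0 = 0" by (simp add: X_def)
    have Yn: "Y (Suc n') = 0" by (simp add: Y_def Suc)
    have z: "X (Suc r) + Y r = 0" if "r \<le> n'" for r
    proof -
      obtain b where b: "n' = r + b" using \<open>r \<le> n'\<close> le_Suc_ex by blast
      have n1: "n - Suc r = b" "n - r = Suc b" "n - r - 1 = b" using Suc b by auto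
      have "X (Suc r) + Y r = Poly_Mapping.single 0 (c (Suc r) * real (Suc r * (k + Suc r - 1))
           + c r * real (Suc b * (l + Suc b - 1))) * A r * B b"
        unfolding X_def Y_def n1 by (simp add: single_add algebra_simps)
      also have "c (Suc r) * real (Suc r * (k + Suc r - 1)) + c r * real (Suc b * (l + Suc b - 1)) = 0"
      proof -
        have nn: "n = Suc (r + b)" using Suc b by simp
        have cS: "c (Suc r) = (-1) ^ Suc r * ((real k + real (Suc (r + b)) - 1) gchoose b)
            * ((real l + real (Suc (r + b)) - 1) gchoose Suc r)"
          unfolding c_def n1 by (simp only: nn)
        have cr: "c r = (-1) ^ r * ((real k + real (Suc (r + b)) - 1) gchoose Suc b)
            * ((real l + real (Suc (r + b)) - 1) gchoose r)"
          unfolding c_def n1 by (simp only: nn)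
        show ?thesis unfolding cS cr by (rule coef_id)
      qed
      finally show ?thesis by simp
    qed
    have "(\<Sum>r\<le>n. X r + Y r) = (\<Sum>r\<le>Suc n'. X r) + (\<Sum>r\<le>Suc n'. Y r)"
      by (simp add: Suc sum.distrib)
    also have "\<dots> = (X 0 + (\<Sum>r\<le>n'. X (Suc r))) + ((\<Sum>r\<le>n'. Y r) + Y (Suc n'))"
      by (simp only: sum.atMost_Suc_shift[of X] sum.atMost_Suc[of Y])
    also have "\<dots> = (\<Sum>r\<le>n'. X (Suc r) + Y r)"
      by (simp add: X0 Yn sum.distrib)
    also have "\<dots> = 0"
      by (rule sum.neutral) (use z in auto)
    finally show ?thesis unfolding main .
  qed
qed


end
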